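(* Let $\sigma>0$, $A>0$, and let $f:\mathbb{R}\to\mathbb{R}$ be continuous, bandlimited to $\sigma$ rad/s, with $|f(t)|\le A/(1+t^2)$ for all $t$. Let $\alpha>A\sigma$, $g(t)=\alpha t+f(t)$, and for $\beta\in\mathbb{R}$ define $h_\beta(u)=g^{-1}(u)-\beta u$, $u\in\mathbb{R}$. Then $h_\beta$ is of moderate decrease if and only if $\beta=1/\alpha$.
   Context: Fourier transform convention: $\hat f(\xi)=\int_{\mathbb{R}}f(t)e^{-i2\pi\xi t}\,dt$; $f$ is bandlimited to $\sigma$ rad/s if $\hat f(\xi)=0$ for $|\xi|>\sigma/(2\pi)$. A function $h$ is of moderate decrease if it is continuous and there is $A'>0$ with $|h(u)|\le A'/(1+u^2)$ for all $u\in\mathbb{R}$. Under the hypotheses $g$ is a strictly increasing bijection of $\mathbb{R}$. *)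

theory Defs
  imports "HOL-Analysis.Analysis"
begin

definition fourier :: "(real \<Rightarrow> real) \<Rightarrow> real \<Rightarrow> complex" where
  "fourier f \<xi> = integral UNIV (\<lambda>t. complex_of_real (f t) * exp (- (\<i> * complex_of_real (2 * pi * \<xi> * t))))"

text \<open>f is bandlimited to sigma rad/s.\<close>
definition bandlimited :: "(real \<Rightarrow> real) \<Rightarrow> real \<Rightarrow> bool" where
  "bandlimited f \<sigma> \<longleftrightarrow> (\<forall>\<xi>. \<bar>\<xi>\<bar> > \<sigma> / (2 * pi) \<longrightarrow> fourier f \<xi> = 0)"

definition moderate_decrease :: "(real \<Rightarrow> real) \<Rightarrow> bool" where
  "moderate_decrease h \<longleftrightarrow> continuous_on UNIV h \<and>
     (\<exists>A'>0. \<forall>u. \<bar>h u\<bar> \<le> A' / (1 + u^2))"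

end

theory Submission
  imports Defs "HOL-Probability.Probability"
begin


definition gN :: "nat \<Rightarrow> real \<Rightarrow> real" where
  "gN N x = (\<Sum>k<N. (-1)^k * sin (real (2*k+1) * x) / (real (2*k+1))^2)"
definition dN :: "nat \<Rightarrow> real \<Rightarrow> real" where
  "dN N x = (\<Sum>k<N. (-1)^k * cos (real (2*k+1) * x) / real (2*k+1))"
definition wN :: "nat \<Rightarrow> real \<Rightarrow> real" where
  "wN N x = - ((-1)^N * cos (2 * real N * x) / (4 * real N * cos x))"

lemma sin_sum_closed:
  "(\<Sum>k<N. (-1)^k * sin (real (2*k+1) * x)) * (2 * cos x) = - ((-1)^N * sin (2 * real N * x))"
proof (induction N)
  case 0 then show ?case by simp
next
  case (Suc N)
  have e: "sin (real (2*N+1) * x) * (2 * cos x) = sin (2 * real (Suc N) * x) + sin (2 * real N * x)"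
  proof -
    have a: "2 * real (Suc N) * x = real (2*N+1) * x + x" by (simp add: algebra_simps)
    have b: "2 * real N * x = real (2*N+1) * x - x" by (simp add: algebra_simps)
    show ?thesis unfolding a b sin_add sin_diff by (simp add: algebra_simps)
  qed
  have "(\<Sum>k<Suc N. (-1)^k * sin (real (2*k+1) * x)) * (2 * cos x)
     = (\<Sum>k<N. (-1)^k * sin (real (2*k+1) * x)) * (2 * cos x) + (-1)^N * (sin (real (2*N+1) * x) * (2 * cos x))"
    by (simp add: algebra_simps)
  also have "\<dots> = - ((-1)^Suc N * sin (2 * real (Suc N) * x))"
    unfolding Suc e by (simp add: algebra_simps)
  finally show ?case .
qed

lemma sin_lin_deriv: "((\<lambda>x. c * sin (a * x)) has_real_derivative c * (cos (a * x) * a)) (at x within S)"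
  by (rule derivative_eq_intros refl | simp)+
lemma cos_lin_deriv: "((\<lambda>x. c * cos (a * x)) has_real_derivative - (c * (sin (a * x) * a))) (at x within S)"
  by (rule derivative_eq_intros refl | simp)+

lemma aux_div_sq: "(d::real) \<noteq> 0 \<Longrightarrow> (c / d^2) * (s * d) = c * s / d"
  by (simp add: power2_eq_square field_simps)

lemma gN_deriv: "(gN N has_real_derivative dN N x) (at x within S)"
proof -
  have e: "gN N = (\<lambda>x. \<Sum>k<N. ((-1)^k / (real (2*k+1))^2) * sin (real (2*k+1) * x))"
    unfolding gN_def by (auto intro!: sum.cong)
  have "(gN N has_real_derivative (\<Sum>k<N. ((-1)^k / (real (2*k+1))^2) * (cos (real (2*k+1) * x) * real (2*k+1)))) (at x within S)"
    unfolding e by (rule DERIV_sum, rule sin_lin_deriv)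
  moreover have "(\<Sum>k<N. ((-1)^k / (real (2*k+1))^2) * (cos (real (2*k+1) * x) * real (2*k+1))) = dN N x"
    unfolding dN_def by (intro sum.cong refl) (rule aux_div_sq, simp)
  ultimately show ?thesis by simp
qed

lemma dN_deriv: "(dN N has_real_derivative - (\<Sum>k<N. (-1)^k * sin (real (2*k+1) * x))) (at x within S)"
proof -
  have e: "dN N = (\<lambda>x. \<Sum>k<N. ((-1)^k / real (2*k+1)) * cos (real (2*k+1) * x))"
    unfolding dN_def by (auto intro!: sum.cong)
  have "(dN N has_real_derivative (\<Sum>k<N. - (((-1)^k / real (2*k+1)) * (sin (real (2*k+1) * x) * real (2*k+1))))) (at x within S)"
    unfolding e by (rule DERIV_sum, rule cos_lin_deriv)
  moreover have "(\<Sum>k<N. - (((-1)^k / real (2*k+1)) * (sin (real (2*k+1) * x) * real (2*k+1))))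
     = - (\<Sum>k<N. (-1)^k * sin (real (2*k+1) * x))"
    by (simp add: sum_negf[symmetric])
  ultimately show ?thesis by simp
qed

lemma dN_deriv': "cos x \<noteq> 0 \<Longrightarrow> (dN N has_real_derivative (-1)^N * sin (2 * real N * x) / (2 * cos x)) (at x within S)"
proof -
  assume c: "cos x \<noteq> 0"
  have "- (\<Sum>k<N. (-1)^k * sin (real (2*k+1) * x)) = (-1)^N * sin (2 * real N * x) / (2 * cos x)"
    using sin_sum_closed[where N=N and x=x] c by (simp add: field_simps)
  with dN_deriv[where N=N and x=x and S=S] show ?thesis by simp
qed

lemma wN_deriv: "cos x \<noteq> 0 \<Longrightarrow> N \<ge> 1 \<Longrightarrow>
  (wN N has_real_derivative (-1)^N * sin (2 * real N * x) / (2 * cos x)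
     - (-1)^N * cos (2 * real N * x) * sin x / (4 * real N * (cos x)^2)) (at x within S)"
  unfolding wN_def
  apply (rule derivative_eq_intros refl | simp)+
  apply (simp add: field_simps power2_eq_square)
  done

lemma cos_ge_c: "0 \<le> c \<Longrightarrow> c \<le> pi \<Longrightarrow> \<bar>x\<bar> \<le> c \<Longrightarrow> cos c \<le> cos x"
  by (metis abs_ge_zero cos_abs_real cos_monotone_0_pi_le)

lemma dN_close:
  assumes c: "0 \<le> c" "c < pi/2" and N: "N \<ge> 1" and x: "\<bar>x\<bar> \<le> c"
  shows "\<bar>dN N x - dN N 0\<bar> \<le> (c / (cos c)^2 + 2 / cos c) / (4 * real N)"
proof -
  have cc: "cos c > 0" using c by (intro cos_gt_zero_pi) auto
  have cy: "cos c \<le> cos y" if "y \<in> {-c..c}" for y using that c cos_ge_c[of c y] by auto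
  define E where "E = (\<lambda>y. dN N y - wN N y)"
  define B where "B = 1 / (4 * real N * (cos c)^2)"
  have dE: "(E has_field_derivative ((-1)^N * cos (2 * real N * y) * sin y / (4 * real N * (cos y)^2))) (at y within {-c..c})"
    if "y \<in> {-c..c}" for y
  proof -
    have "cos y > 0" using cy[OF that] cc by linarith
    then show ?thesis unfolding E_def
      using DERIV_diff[OF dN_deriv'[of y N "{-c..c}"] wN_deriv[of y N "{-c..c}"]] N by simp
  qed
  have bE: "norm ((-1)^N * cos (2 * real N * y) * sin y / (4 * real N * (cos y)^2)) \<le> B"
    if "y \<in> {-c..c}" for y
  proof -
    have cyp: "cos y > 0" using cy[OF that] cc by linarith
    have "norm ((-1)^N * cos (2 * real N * y) * sin y / (4 * real N * (cos y)^2))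
        = \<bar>cos (2 * real N * y)\<bar> * \<bar>sin y\<bar> / (4 * real N * (cos y)^2)"
      using cyp N by (simp add: abs_mult)
    also have "\<dots> \<le> 1 * 1 / (4 * real N * (cos y)^2)"
      using cyp N by (intro divide_right_mono mult_mono) auto
    also have "\<dots> \<le> 1 / (4 * real N * (cos c)^2)"
    proof -
      have pos: "0 < 4 * real N * (cos c)^2" using cc N by simp
      have le: "4 * real N * (cos c)^2 \<le> 4 * real N * (cos y)^2"
        using cc cy[OF that] by (intro mult_left_mono power_mono) auto
      show ?thesis using frac_le[OF _ _ pos le, of 1] by simp
    qed
    finally show ?thesis unfolding B_def by simp
  qed
  have "norm (E x - E 0) \<le> B * norm (x - 0)"
    by (rule field_differentiable_bound[OF _ dE bE]) (use x c in auto)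
  moreover have "B \<ge> 0" unfolding B_def by simp
  ultimately have 1: "\<bar>E x - E 0\<bar> \<le> B * c" using x
    by (metis diff_zero mult_left_mono order_trans real_norm_def)
  have w: "\<bar>wN N y\<bar> \<le> 1 / (4 * real N * cos c)" if "y \<in> {-c..c}" for y
  proof -
    have cyp: "cos y > 0" using cy[OF that] cc by linarith
    have "\<bar>wN N y\<bar> = \<bar>cos (2 * real N * y)\<bar> / (4 * real N * cos y)"
      unfolding wN_def using cyp N by (simp add: abs_mult)
    also have "\<dots> \<le> 1 / (4 * real N * cos y)"
      using cyp N by (intro divide_right_mono) auto
    also have "\<dots> \<le> 1 / (4 * real N * cos c)"
    proof -
      have pos: "0 < 4 * real N * cos c" using cc N by simp
      have le: "4 * real N * cos c \<le> 4 * real N * cos y"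
        using cc cy[OF that] by (intro mult_left_mono) auto
      show ?thesis using frac_le[OF _ _ pos le, of 1] by simp
    qed
    finally show ?thesis .
  qed
  have w1: "\<bar>wN N x\<bar> \<le> 1 / (4 * real N * cos c)" using w[of x] x by (simp add: abs_le_iff)
  have w0: "\<bar>wN N 0\<bar> \<le> 1 / (4 * real N * cos c)" using w[of 0] c by simp
  have "dN N x - dN N 0 = (E x - E 0) + wN N x - wN N 0" unfolding E_def by simp
  then have "\<bar>dN N x - dN N 0\<bar> \<le> B * c + 1 / (4 * real N * cos c) + 1 / (4 * real N * cos c)"
    using 1 w1 w0 by linarith
  also have "\<dots> = (c / (cos c)^2 + 2 / cos c) / (4 * real N)"
    unfolding B_def using cc N by (simp add: field_simps power2_eq_square)
  finally show ?thesis .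
qed

lemma gN_close:
  assumes c: "0 \<le> c" "c < pi/2" and N: "N \<ge> 1" and x: "\<bar>x\<bar> \<le> c"
  shows "\<bar>gN N x - dN N 0 * x\<bar> \<le> (c / (cos c)^2 + 2 / cos c) / (4 * real N) * \<bar>x\<bar>"
proof -
  define K where "K = (c / (cos c)^2 + 2 / cos c) / (4 * real N)"
  define P where "P = (\<lambda>y. gN N y - dN N 0 * y)"
  have dP: "(P has_field_derivative (dN N y - dN N 0)) (at y within {-c..c})" for y
    unfolding P_def by (rule derivative_eq_intros gN_deriv refl | simp)+
  have bP: "norm (dN N y - dN N 0) \<le> K" if "y \<in> {-c..c}" for y
    using dN_close[OF c N, of y] that unfolding K_def by auto
  have "norm (P x - P 0) \<le> K * norm (x - 0)"
    by (rule field_differentiable_bound[OF _ dP bP]) (use x c in auto)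
  moreover have "P 0 = 0" unfolding P_def gN_def by simp
  ultimately show ?thesis unfolding P_def K_def by simp
qed

lemma leibniz_pi4: "(\<lambda>k. (-1)^k / real (2*k+1)) sums (pi/4)"
proof -
  have "(\<lambda>k. (-1)^k * (1 / real (k * 2 + 1) * 1 ^ (k * 2 + 1))) sums (\<Sum>k. (-1)^k * (1 / real (k * 2 + 1) * 1 ^ (k * 2 + 1)))"
    using summable_arctan_series[of 1] by (intro summable_sums) simp
  also have "(\<Sum>k. (-1)^k * (1 / real (k * 2 + 1) * 1 ^ (k * 2 + 1))) = pi/4"
    using arctan_series[of 1] by (simp add: arctan_one)
  finally show ?thesis by (simp add: mult.commute)
qed

lemma dN0: "dN N 0 = (\<Sum>k<N. (-1)^k / real (2*k+1))"
  unfolding dN_def by simp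

lemma tri_uniform:
  assumes c: "0 \<le> c" "c < pi/2" and e: "e > 0"
  shows "\<exists>N0. \<forall>N\<ge>N0. \<forall>x. \<bar>x\<bar> \<le> c \<longrightarrow> \<bar>gN N x - pi/4 * x\<bar> \<le> e"
proof -
  define K where "K = (c / (cos c)^2 + 2 / cos c)"
  have cc: "cos c > 0" using c by (intro cos_gt_zero_pi) auto
  have K0: "K \<ge> 0" unfolding K_def using cc c by auto
  define e' where "e' = e / (2 * (c + 1))"
  have e': "e' > 0" unfolding e'_def using e c by auto
  have "(\<lambda>N. dN N 0) \<longlonglongrightarrow> pi/4"
    using leibniz_pi4 unfolding sums_def dN0 .
  then obtain N1 where N1: "\<And>N. N \<ge> N1 \<Longrightarrow> \<bar>dN N 0 - pi/4\<bar> < e'"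
    using e' LIMSEQ_D[of _ "pi/4" e'] by (auto simp: dist_real_def)
  obtain N2 :: nat where N2: "real N2 > K / (4 * e')" using reals_Archimedean2 by blast
  show ?thesis
  proof (intro exI[of _ "max (max N1 N2) 1"] allI impI)
    fix N x assume N: "max (max N1 N2) 1 \<le> N" and x: "\<bar>x\<bar> \<le> c"
    have N1': "N \<ge> 1" using N by auto
    have "K / (4 * e') < real N" using N2 N by linarith
    then have KN: "K / (4 * real N) \<le> e'" using e' N1' by (simp add: field_simps)
    have "\<bar>gN N x - pi/4 * x\<bar> \<le> \<bar>gN N x - dN N 0 * x\<bar> + \<bar>dN N 0 - pi/4\<bar> * \<bar>x\<bar>"
    proof -
      have eq: "gN N x - pi/4*x = (gN N x - dN N 0 * x) + (dN N 0 - pi/4) * x" by (simp add: algebra_simps)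
      show ?thesis unfolding eq by (metis abs_mult abs_triangle_ineq)
    qed
    also have "\<dots> \<le> K / (4 * real N) * \<bar>x\<bar> + e' * \<bar>x\<bar>"
      using gN_close[OF c N1' x] N1[of N] N unfolding K_def
      by (intro add_mono mult_right_mono) auto
    also have "\<dots> \<le> e' * c + e' * c"
      using KN x e' by (intro add_mono mult_mono) auto
    also have "\<dots> = e * (c / (c + 1))"
      unfolding e'_def using c by (simp add: field_simps add_nonneg_eq_0_iff)
    also have "\<dots> \<le> e * 1"
      using c e by (intro mult_left_mono) auto
    also have "\<dots> = e" by simp
    finally show "\<bar>gN N x - pi/4 * x\<bar> \<le> e" .
  qed
qed


lemma odd_squares_sums: "(\<lambda>k. 1 / (real (2*k+1))^2) sums (pi^2/8)"
proof -
  have s: "(\<lambda>n. 1 / (real n + 1)^2) sums (pi^2/6)" using inverse_squares_sums by (simp add: add.commute)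
  have g: "(\<lambda>n. \<Sum>j\<in>{n*2..<n*2+2}. 1 / (real j + 1)^2) sums (pi^2/6)"
    using sums_group[OF s, of 2] by simp
  have e: "(\<Sum>j\<in>{n*2..<n*2+2}. 1 / (real j + 1)^2) = 1 / (real (2*n+1))^2 + 1/4 * (1 / (real n + 1)^2)" for n
  proof -
    have "{n*2..<n*2+2} = {n*2, n*2+1}" by auto
    then show ?thesis by (simp add: field_simps power2_eq_square)
  qed
  have h: "(\<lambda>n. 1/4 * (1 / (real n + 1)^2)) sums (1/4 * (pi^2/6))" by (rule sums_mult[OF s])
  have "(\<lambda>n. (1 / (real (2*n+1))^2 + 1/4 * (1 / (real n + 1)^2)) - 1/4 * (1 / (real n + 1)^2)) sums (pi^2/6 - 1/4 * (pi^2/6))"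
    using sums_diff[OF g[unfolded e] h] .
  then show ?thesis by simp
qed

lemma odd_squares_le: "(\<Sum>k<N. 1 / (real (2*k+1))^2) \<le> pi^2/8"
proof -
  have "(\<Sum>k<N. 1 / (real (2*k+1))^2) \<le> (\<Sum>k. 1 / (real (2*k+1))^2)"
    using odd_squares_sums by (intro sum_le_suminf) (auto simp: sums_iff)
  then show ?thesis using odd_squares_sums by (simp add: sums_iff)
qed

lemma final_part:
  fixes f f' :: "real \<Rightarrow> real" and A \<alpha> \<beta> L :: real
  assumes \<alpha>: "\<alpha> > 0" and A: "A > 0" and cf: "continuous_on UNIV f"
    and fb: "\<And>t. \<bar>f t\<bar> \<le> A / (1 + t^2)"
    and df: "\<And>x. (f has_real_derivative f' x) (at x)"
    and bf: "\<And>x. \<bar>f' x\<bar> \<le> L" and L: "L < \<alpha>"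
  shows "moderate_decrease (\<lambda>u. inv (\<lambda>t. \<alpha> * t + f t) u - \<beta> * u) \<longleftrightarrow> \<beta> = 1 / \<alpha>"
proof -
  define g where "g = (\<lambda>t. \<alpha> * t + f t)"
  have fA: "\<bar>f t\<bar> \<le> A" for t
  proof -
    have "A / (1 + t^2) \<le> A / 1" using A by (intro divide_left_mono) (auto intro!: add_pos_nonneg)
    then show ?thesis using fb[of t] by simp
  qed
  have dg: "(g has_real_derivative \<alpha> + f' x) (at x)" for x
    unfolding g_def by (rule derivative_eq_intros df refl | simp)+
  have dgpos: "\<alpha> + f' x > 0" for x using bf[of x] L by linarith
  have cg: "isCont g x" for x using dg DERIV_isCont by blast
  have mono: "g a < g b" if "a < b" for a b
    using DERIV_pos_imp_increasing[OF that] dg dgpos by blast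
  have inj: "inj g"
    by (metis linorder_inj_onI' mono order_less_irrefl)
  have surj: "\<exists>t. g t = u" for u
  proof -
    define a where "a = (u - A) / \<alpha>"
    define b where "b = (u + A) / \<alpha>"
    have ga: "g a \<le> u" unfolding g_def a_def using fA[of "(u - A) / \<alpha>"] \<alpha> by (simp add: field_simps)
    have hb: "\<alpha> * b = u + A" unfolding b_def using \<alpha> by simp
    have gb: "u \<le> g b" using fA[of b] hb unfolding g_def abs_le_iff by linarith
    have ab: "a \<le> b" unfolding a_def b_def using A \<alpha> by (simp add: divide_right_mono)
    show ?thesis using IVT[of g a u b, OF ga gb ab] cg by blast
  qed
  then have surjg: "surj g" by (metis surjI)
  have gi: "g (inv g u) = u" for u using surjg by (simp add: surj_f_inv_f)
  have ig: "inv g (g t) = t" for t using inj by simp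
  have cinv: "isCont (inv g) u" for u
  proof -
    have "isCont (inv g) (g (inv g u))"
      by (rule isCont_inverse_function[where d=1]) (auto simp: ig cg)
    then show ?thesis by (simp add: gi)
  qed
  have hv: "\<bar>inv g u - u / \<alpha>\<bar> \<le> A / \<alpha>" for u
  proof -
    have "\<alpha> * inv g u + f (inv g u) = u" using gi[of u] unfolding g_def .
    then have E: "\<alpha> * inv g u - u = - f (inv g u)" by linarith
    have "inv g u - u / \<alpha> = (\<alpha> * inv g u - u) / \<alpha>" using \<alpha> by (simp add: field_simps)
    then have "inv g u - u / \<alpha> = - f (inv g u) / \<alpha>" unfolding E .
    then show ?thesis using fA[of "inv g u"] \<alpha> by (simp add: divide_right_mono)
  qed
  show ?thesis
  proof
    assume md: "moderate_decrease (\<lambda>u. inv (\<lambda>t. \<alpha> * t + f t) u - \<beta> * u)"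
    then obtain A' where A': "A' > 0" "\<And>u. \<bar>inv g u - \<beta> * u\<bar> \<le> A' / (1 + u^2)"
      unfolding moderate_decrease_def g_def by blast
    show "\<beta> = 1 / \<alpha>"
    proof (rule ccontr)
      assume ne: "\<beta> \<noteq> 1 / \<alpha>"
      define d where "d = \<bar>1/\<alpha> - \<beta>\<bar>"
      have d: "d > 0" unfolding d_def using ne by simp
      define u where "u = (A' + A / \<alpha> + 1) / d"
      have u0: "u \<ge> 0" unfolding u_def using d A' A \<alpha> by simp
      have "A' / (1 + u^2) \<le> A' / 1" using A' by (intro divide_left_mono) (auto intro!: add_pos_nonneg)
      then have b1: "\<bar>inv g u - \<beta> * u\<bar> \<le> A'" using A'(2)[of u] by simp
      have eq: "inv g u - \<beta> * u = (1/\<alpha> - \<beta>) * u + (inv g u - u / \<alpha>)" by (simp add: algebra_simps)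
      have "\<bar>(1/\<alpha> - \<beta>) * u\<bar> = d * u" unfolding d_def using u0 by (simp add: abs_mult)
      also have "\<dots> = A' + A / \<alpha> + 1" unfolding u_def using d by simp
      finally have "\<bar>(1/\<alpha> - \<beta>) * u\<bar> = A' + A / \<alpha> + 1" .
      then have "\<bar>inv g u - \<beta> * u\<bar> \<ge> A' + 1" using hv[of u] unfolding eq by linarith
      then show False using b1 by linarith
    qed
  next
    assume b: "\<beta> = 1 / \<alpha>"
    have cont: "continuous_on UNIV (\<lambda>u. inv g u - \<beta> * u)"
      by (intro continuous_at_imp_continuous_on ballI continuous_intros cinv)
    define C where "C = 1 + 2 * A^2 + 2 * \<alpha>^2"
    have bound: "\<bar>inv g u - \<beta> * u\<bar> \<le> (A * C / \<alpha>) / (1 + u^2)" for u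
    proof -
      define v where "v = inv g u"
      have uv: "u = \<alpha> * v + f v" using gi[of u] unfolding g_def v_def by simp
      have "u^2 \<le> 2 * \<alpha>^2 * v^2 + 2 * A^2"
      proof -
        have "u^2 = (\<alpha> * v + f v)^2" using uv by simp
        also have "\<dots> \<le> 2 * (\<alpha> * v)^2 + 2 * (f v)^2"
          by (smt (verit) power2_diff zero_le_power2 power2_sum)
        also have "(f v)^2 \<le> A^2" using power_mono[OF fA[of v], of 2] by simp
        then have "2 * (\<alpha> * v)^2 + 2 * (f v)^2 \<le> 2 * \<alpha>^2 * v^2 + 2 * A^2"
          by (simp add: power_mult_distrib)
        finally show ?thesis .
      qed
      then have uC: "1 + u^2 \<le> C * (1 + v^2)" unfolding C_def
        by (simp add: algebra_simps) (smt (verit) mult_nonneg_nonneg zero_le_power2)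
      have C0: "C > 0" unfolding C_def by (simp add: add_pos_nonneg)
      have "\<bar>inv g u - \<beta> * u\<bar> = \<bar>f v\<bar> / \<alpha>"
      proof -
        have E: "\<alpha> * v - u = - f v" using uv by linarith
        have "inv g u - \<beta> * u = (\<alpha> * v - u) / \<alpha>" using \<alpha> b unfolding v_def[symmetric] by (simp add: field_simps)
        then have "inv g u - \<beta> * u = - f v / \<alpha>" unfolding E .
        then show ?thesis using \<alpha> by simp
      qed
      also have "\<dots> \<le> (A / (1 + v^2)) / \<alpha>" using fb[of v] \<alpha> by (intro divide_right_mono) auto
      also have "\<dots> = (A * C / \<alpha>) / (C * (1 + v^2))"
      proof -
        have p: "1 + v^2 > 0" by (simp add: add_pos_nonneg)
        show ?thesis using C0 by (simp add: divide_divide_eq_left mult.commute mult.left_commute)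
      qed
      also have "\<dots> \<le> (A * C / \<alpha>) / (1 + u^2)"
        using uC A C0 \<alpha> by (intro divide_left_mono) (auto intro!: mult_pos_pos add_pos_nonneg)
      finally show ?thesis .
    qed
    have "A * C / \<alpha> > 0" using A \<alpha> unfolding C_def by (simp add: add_pos_nonneg)
    then show "moderate_decrease (\<lambda>u. inv (\<lambda>t. \<alpha> * t + f t) u - \<beta> * u)"
      unfolding moderate_decrease_def g_def[symmetric] using cont bound by blast
  qed
qed


lemma dens_dist:
  fixes p :: "real \<Rightarrow> real" and m :: real
  assumes pm: "p \<in> borel_measurable borel" and pint: "integrable lborel p" and pnn: "\<And>x. p x \<ge> 0"
    and m: "m = (\<integral>x. p x \<partial>lborel)" "m > 0"
  defines "M \<equiv> density lborel (\<lambda>x. ennreal (p x / m))"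
  shows "real_distribution M"
    and "\<And>t. char M t = (CLINT x|lborel. complex_of_real (p x) * iexp (t * x)) / complex_of_real m"
    and "\<And>a. measure M {a} = 0"
    and "\<And>a b. measure M {a<..b} = (\<integral>x. indicator {a<..b} x * p x \<partial>lborel) / m"
proof -
  have [measurable]: "p \<in> borel_measurable lborel" using pm by simp
  have pint': "integrable lborel (\<lambda>x. p x / m)" using pint by simp
  have "emeasure M (space M) = (\<integral>\<^sup>+ x. ennreal (p x / m) \<partial>lborel)"
    unfolding M_def by (simp add: emeasure_density nn_integral_set_ennreal[symmetric])
  also have "\<dots> = ennreal (\<integral>x. p x / m \<partial>lborel)"
    using pint' pnn m by (intro nn_integral_eq_integral) auto
  also have "\<dots> = 1" using m by simp
  finally have ps: "prob_space M" by (rule prob_spaceI)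
  show rd: "real_distribution M"
    unfolding real_distribution_def real_distribution_axioms_def using ps
    by (simp add: M_def)
  show "char M t = (CLINT x|lborel. complex_of_real (p x) * iexp (t * x)) / complex_of_real m" for t
  proof -
    have "char M t = (CLINT x|lborel. (p x / m) *\<^sub>R iexp (t * x))"
      unfolding char_def M_def using pnn m by (subst integral_density) auto
    also have "\<dots> = (CLINT x|lborel. complex_of_real (p x) * iexp (t * x) / complex_of_real m)"
      by (intro Bochner_Integration.integral_cong refl) (simp add: scaleR_conv_of_real)
    also have "\<dots> = (CLINT x|lborel. complex_of_real (p x) * iexp (t * x)) / complex_of_real m"
      by (rule integral_divide_zero)
    finally show ?thesis .
  qed
  show "measure M {a} = 0" for a
  proof -
    have AEa: "AE x in lborel. x \<in> {a} \<longrightarrow> ennreal (p x / m) = 0"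
      using AE_lborel_singleton[of a] by eventually_elim auto
    have "{a} \<in> null_sets M" unfolding M_def
    proof (subst null_sets_density_iff)
      show "(\<lambda>x. ennreal (p x / m)) \<in> borel_measurable lborel" by simp
      show "{a} \<in> sets lborel \<and> (AE x in lborel. x \<in> {a} \<longrightarrow> ennreal (p x / m) = 0)" using AEa by simp
    qed
    then show ?thesis by (simp add: measure_def null_setsD1)
  qed
  show "measure M {a<..b} = (\<integral>x. indicator {a<..b} x * p x \<partial>lborel) / m" for a b
  proof -
    interpret prob_space M using ps .
    have "measure M {a<..b} = (\<integral>x. indicator {a<..b} x \<partial>M)"
      by (simp add: M_def)
    also have "\<dots> = (\<integral>x. (p x / m) *\<^sub>R indicator {a<..b} x \<partial>lborel)"
      unfolding M_def using pnn m by (subst integral_density) auto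
    also have "\<dots> = (\<integral>x. indicator {a<..b} x * p x / m \<partial>lborel)"
      by (intro Bochner_Integration.integral_cong refl) simp
    also have "\<dots> = (\<integral>x. indicator {a<..b} x * p x \<partial>lborel) / m"
      by (rule integral_divide_zero)
    finally show ?thesis .
  qed
qed

lemma int_iexp:
  fixes h :: "real \<Rightarrow> real"
  assumes "integrable lborel h" "h \<in> borel_measurable borel"
  shows "integrable lborel (\<lambda>x. complex_of_real (h x) * iexp (s * x))"
proof (rule Bochner_Integration.integrable_bound[OF assms(1)])
  show "(\<lambda>x. complex_of_real (h x) * iexp (s * x)) \<in> borel_measurable lborel"
    using assms(2) by measurable
  show "AE x in lborel. norm (complex_of_real (h x) * iexp (s * x)) \<le> norm (h x)"
    by (simp add: norm_mult)
qed

lemma f_integrable: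
  fixes f :: "real \<Rightarrow> real"
  assumes cf: "continuous_on UNIV f" and fb: "\<And>t. \<bar>f t\<bar> \<le> A / (1 + t^2)"
  shows "integrable lborel f"
proof -
  have "set_integrable lborel (einterval (-\<infinity>) \<infinity>) (\<lambda>x. inverse (1 + x^2))"
    by (rule integrable_inverse_1_plus_square)
  then have "integrable lborel (\<lambda>x. inverse (1 + x^2) :: real)"
    by (simp add: set_integrable_def)
  then have i: "integrable lborel (\<lambda>x. A * inverse (1 + x^2) :: real)" by simp
  show ?thesis
  proof (rule Bochner_Integration.integrable_bound[OF i])
    show "f \<in> borel_measurable lborel" using borel_measurable_continuous_onI[OF cf] by simp
    show "AE x in lborel. norm (f x) \<le> norm (A * inverse (1 + x^2))"
    proof (intro AE_I2)
      fix x
      have "\<bar>f x\<bar> \<le> \<bar>A / (1 + x^2)\<bar>" using fb[of x] by linarith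
      then show "norm (f x) \<le> norm (A * inverse (1 + x^2))" by (simp add: divide_inverse)
    qed
  qed
qed

lemma psi_facts:
  fixes f :: "real \<Rightarrow> real"
  assumes cf: "continuous_on UNIV f" and fb: "\<And>t. \<bar>f t\<bar> \<le> A / (1 + t^2)"
    and band: "bandlimited f \<sigma>"
  defines "\<psi> \<equiv> (\<lambda>s. CLINT x|lborel. complex_of_real (f x) * iexp (s * x))"
  shows "\<And>s. \<bar>s\<bar> > \<sigma> \<Longrightarrow> \<psi> s = 0"
    and "\<exists>m1 m2 M1 M2. real_distribution M1 \<and> real_distribution M2 \<and>
           (\<forall>a. measure M1 {a} = 0) \<and> (\<forall>a. measure M2 {a} = 0) \<and>
           (\<forall>s. \<psi> s = complex_of_real m1 * char M1 s - complex_of_real m2 * char M2 s) \<and>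
           (\<forall>a b. m1 * measure M1 {a<..b} - m2 * measure M2 {a<..b} = (\<integral>x. indicator {a<..b} x * f x \<partial>lborel))"
proof -
  have fm[measurable]: "f \<in> borel_measurable borel" using borel_measurable_continuous_onI[OF cf] .
  have fi: "integrable lborel f" using f_integrable[OF cf fb] .
  show "\<psi> s = 0" if s: "\<bar>s\<bar> > \<sigma>" for s
  proof -
    have "fourier f (- s / (2 * pi)) = 0"
      using band s unfolding bandlimited_def by (auto simp: abs_minus_cancel divide_strict_right_mono)
    moreover have "fourier f (- s / (2 * pi)) = integral UNIV (\<lambda>x. complex_of_real (f x) * iexp (s * x))"
      unfolding fourier_def
      by (intro arg_cong[where f="integral UNIV"] ext) (simp add: mult.commute)
    moreover have "integral UNIV (\<lambda>x. complex_of_real (f x) * iexp (s * x)) = \<psi> s"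
      unfolding \<psi>_def using int_iexp[OF fi fm] by (rule integral_lborel)
    ultimately show ?thesis by simp
  qed
  define e :: "real \<Rightarrow> real" where "e = indicator {0..1}"
  have em[measurable]: "e \<in> borel_measurable borel" unfolding e_def by simp
  have ei: "integrable lborel e" unfolding e_def by (intro integrable_real_indicator) auto
  have eint: "(\<integral>x. e x \<partial>lborel) = 1" unfolding e_def by simp
  define p where "p = (\<lambda>x. max (f x) 0 + e x)"
  define q where "q = (\<lambda>x. max (- f x) 0 + e x)"
  have pm[measurable]: "p \<in> borel_measurable borel" unfolding p_def by measurable
  have qm[measurable]: "q \<in> borel_measurable borel" unfolding q_def by measurable
  have pi: "integrable lborel p" unfolding p_def using fi ei by (intro Bochner_Integration.integrable_add integrable_max) auto
  have qi: "integrable lborel q" unfolding q_def using fi ei by (intro Bochner_Integration.integrable_add integrable_max) auto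
  have pnn: "p x \<ge> 0" for x unfolding p_def e_def by (simp add: indicator_def)
  have qnn: "q x \<ge> 0" for x unfolding q_def e_def by (simp add: indicator_def)
  have pq: "p x - q x = f x" for x unfolding p_def q_def by auto
  define m1 where "m1 = (\<integral>x. p x \<partial>lborel)"
  define m2 where "m2 = (\<integral>x. q x \<partial>lborel)"
  have m1: "m1 > 0"
  proof -
    have "(\<integral>x. e x \<partial>lborel) \<le> m1" unfolding m1_def
      using ei pi by (intro integral_mono) (auto simp: p_def)
    then show ?thesis using eint by simp
  qed
  have m2: "m2 > 0"
  proof -
    have "(\<integral>x. e x \<partial>lborel) \<le> m2" unfolding m2_def
      using ei qi by (intro integral_mono) (auto simp: q_def)
    then show ?thesis using eint by simp
  qed
  define M1 where "M1 = density lborel (\<lambda>x. ennreal (p x / m1))"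
  define M2 where "M2 = density lborel (\<lambda>x. ennreal (q x / m2))"
  note D1 = dens_dist[OF pm pi pnn m1_def m1, folded M1_def]
  note D2 = dens_dist[OF qm qi qnn m2_def m2, folded M2_def]
  have psi_eq: "\<psi> s = complex_of_real m1 * char M1 s - complex_of_real m2 * char M2 s" for s
  proof -
    have "complex_of_real m1 * char M1 s - complex_of_real m2 * char M2 s
       = (CLINT x|lborel. complex_of_real (p x) * iexp (s * x)) - (CLINT x|lborel. complex_of_real (q x) * iexp (s * x))"
      using m1 m2 by (simp add: D1(2) D2(2))
    also have "\<dots> = (CLINT x|lborel. complex_of_real (p x) * iexp (s * x) - complex_of_real (q x) * iexp (s * x))"
      by (rule Bochner_Integration.integral_diff[symmetric]) (rule int_iexp, fact, fact)+
    also have "\<dots> = \<psi> s" unfolding \<psi>_def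
      by (intro Bochner_Integration.integral_cong refl) (simp add: pq[symmetric] left_diff_distrib)
    finally show ?thesis by simp
  qed
  have meas_eq: "m1 * measure M1 {a<..b} - m2 * measure M2 {a<..b} = (\<integral>x. indicator {a<..b} x * f x \<partial>lborel)" for a b
  proof -
    have ip: "integrable lborel (\<lambda>x. indicator {a<..b} x * p x)"
      using integrable_mult_indicator[OF _ pi, of "{a<..b}"] by simp
    have iq: "integrable lborel (\<lambda>x. indicator {a<..b} x * q x)"
      using integrable_mult_indicator[OF _ qi, of "{a<..b}"] by simp
    have "m1 * measure M1 {a<..b} - m2 * measure M2 {a<..b}
       = (\<integral>x. indicator {a<..b} x * p x \<partial>lborel) - (\<integral>x. indicator {a<..b} x * q x \<partial>lborel)"
      using m1 m2 by (simp add: D1(4) D2(4))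
    also have "\<dots> = (\<integral>x. indicator {a<..b} x * p x - indicator {a<..b} x * q x \<partial>lborel)"
      by (rule Bochner_Integration.integral_diff[symmetric, OF ip iq])
    also have "\<dots> = (\<integral>x. indicator {a<..b} x * f x \<partial>lborel)"
      by (intro Bochner_Integration.integral_cong refl) (simp add: pq[symmetric] right_diff_distrib)
    finally show ?thesis .
  qed
  show "\<exists>m1 m2 M1 M2. real_distribution M1 \<and> real_distribution M2 \<and>
           (\<forall>a. measure M1 {a} = 0) \<and> (\<forall>a. measure M2 {a} = 0) \<and>
           (\<forall>s. \<psi> s = complex_of_real m1 * char M1 s - complex_of_real m2 * char M2 s) \<and>
           (\<forall>a b. m1 * measure M1 {a<..b} - m2 * measure M2 {a<..b} = (\<integral>x. indicator {a<..b} x * f x \<partial>lborel))"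
    using D1(1,3) D2(1,3) psi_eq meas_eq by blast
qed

definition Kc :: "real \<Rightarrow> real \<Rightarrow> real \<Rightarrow> complex" where
  "Kc a b t = integral {a..b} (\<lambda>x. iexp (-(t * x)))"

lemma cont_iexp2: "continuous_on S (\<lambda>z::real\<times>real. iexp (- (fst z * snd z)))"
  by (intro continuous_intros)

lemma Kc_cont: "continuous_on UNIV (Kc a b)"
proof -
  have "continuous_on (UNIV \<times> cbox a b) (\<lambda>(t, x). iexp (-(t * x)))"
    using cont_iexp2 by (simp add: case_prod_beta')
  from integral_continuous_on_param[OF this] show ?thesis
    unfolding Kc_def by simp
qed

lemma Kc_eq:
  assumes "a \<le> b" "t \<noteq> 0"
  shows "Kc a b t = (iexp (-(t * a)) - iexp (-(t * b))) / (\<i> * complex_of_real t)"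
proof -
  define F where "F = (\<lambda>x. \<i> * iexp (-(t * x)) / complex_of_real t)"
  have "((\<lambda>x. iexp (-(t * x))) has_integral F b - F a) {a..b}"
  proof (rule fundamental_theorem_of_calculus[OF assms(1)])
    fix x assume "x \<in> {a..b}"
    have d1: "((\<lambda>x. - (t * x)) has_vector_derivative - t) (at x within {a..b})"
      by (rule derivative_eq_intros refl | simp)+
    have d2: "(iexp has_vector_derivative \<i> * iexp (-(t * x))) (at (-(t * x)) within (\<lambda>x. - (t * x)) ` {a..b})"
      by (rule has_vector_derivative_iexp)
    have "((iexp \<circ> (\<lambda>x. - (t * x))) has_vector_derivative (- t) *\<^sub>R (\<i> * iexp (-(t * x)))) (at x within {a..b})"
      by (rule vector_diff_chain_within[OF d1 d2])
    then have "((\<lambda>x. iexp (- (t * x))) has_vector_derivative (- t) *\<^sub>R (\<i> * iexp (-(t * x)))) (at x within {a..b})"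
      by (simp add: o_def)
    then have "((\<lambda>x. \<i> * iexp (- (t * x)) / complex_of_real t) has_vector_derivative (\<i> * ((- t) *\<^sub>R (\<i> * iexp (-(t * x))))) / complex_of_real t) (at x within {a..b})"
      by (intro has_vector_derivative_mult_right has_vector_derivative_divide)
    then have "(F has_vector_derivative (\<i> * ((- t) *\<^sub>R (\<i> * iexp (-(t * x))))) / complex_of_real t) (at x within {a..b})"
      unfolding F_def .
    moreover have "(\<i> * ((- t) *\<^sub>R (\<i> * iexp (-(t * x))))) / complex_of_real t = iexp (-(t * x))"
      using assms(2) by (simp add: field_simps scaleR_conv_of_real)
    ultimately show "(F has_vector_derivative iexp (-(t * x))) (at x within {a..b})" by simp
  qed
  then have "Kc a b t = F b - F a" unfolding Kc_def by (rule integral_unique)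
  also have "\<dots> = (iexp (-(t * a)) - iexp (-(t * b))) / (\<i> * complex_of_real t)"
    unfolding F_def using assms(2) by (simp add: field_simps)
  finally show ?thesis .
qed

lemma levy_to_HK:
  fixes \<phi> :: "real \<Rightarrow> complex"
  assumes phi: "continuous_on UNIV \<phi>" and ab: "a \<le> b" and T: "T \<ge> 0"
  shows "(CLBINT t=ereal (-T)..ereal T. (iexp (-(t * a)) - iexp (-(t * b))) / (\<i> * complex_of_real t) * \<phi> t)
       = integral {-T..T} (\<lambda>t. Kc a b t * \<phi> t)"
proof -
  have pm[measurable]: "\<phi> \<in> borel_measurable borel" using borel_measurable_continuous_onI[OF phi] .
  have km[measurable]: "Kc a b \<in> borel_measurable borel" using borel_measurable_continuous_onI[OF Kc_cont] .
  have c: "continuous_on {-T..T} (\<lambda>t. Kc a b t * \<phi> t)"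
    using Kc_cont phi by (intro continuous_intros) (auto intro: continuous_on_subset)
  have "(CLBINT t=ereal (-T)..ereal T. (iexp (-(t * a)) - iexp (-(t * b))) / (\<i> * complex_of_real t) * \<phi> t)
      = (CLBINT t:{-T..T}. (iexp (-(t * a)) - iexp (-(t * b))) / (\<i> * complex_of_real t) * \<phi> t)"
    using T by (intro interval_integral_Icc) simp
  also have "\<dots> = (CLBINT t:{-T..T}. Kc a b t * \<phi> t)"
  proof (rule set_lebesgue_integral_cong_AE)
    show "AE x\<in>{-T..T} in lborel. (iexp (-(x * a)) - iexp (-(x * b))) / (\<i> * complex_of_real x) * \<phi> x = Kc a b x * \<phi> x"
      using AE_lborel_singleton[of 0] by eventually_elim (simp add: Kc_eq[OF ab])
  qed auto
  also have "\<dots> = integral {-T..T} (\<lambda>t. Kc a b t * \<phi> t)"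
    using borel_integrable_atLeastAtMost'[OF c] by (rule set_borel_integral_eq_integral)
  finally show ?thesis .
qed

lemma char_cont: "real_distribution M \<Longrightarrow> continuous_on UNIV (char M)"
  by (intro continuous_at_imp_continuous_on ballI real_distribution.isCont_char)

lemma levy_HK_seq:
  assumes rd: "real_distribution M" and ab: "a \<le> b"
  shows "complex_of_real (1 / (2 * pi)) * (CLBINT t=ereal (real_of_int (- int T))..ereal (real T). (iexp (- (t * a)) - iexp (- (t * b))) / (\<i> * complex_of_real t) * char M t)
       = complex_of_real (1 / (2 * pi)) * integral {- real T..real T} (\<lambda>t. Kc a b t * char M t)"
  using levy_to_HK[OF char_cont[OF rd] ab, of "real T"] by simp

lemma inversion:
  fixes f :: "real \<Rightarrow> real"
  assumes cf: "continuous_on UNIV f" and fb: "\<And>t. \<bar>f t\<bar> \<le> A / (1 + t^2)"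
    and band: "bandlimited f \<sigma>" and \<sigma>: "\<sigma> > 0"
  defines "\<psi> \<equiv> (\<lambda>s. CLINT x|lborel. complex_of_real (f x) * iexp (s * x))"
  shows "continuous_on UNIV \<psi>"
    and "\<And>s. \<bar>s\<bar> > \<sigma> \<Longrightarrow> \<psi> s = 0"
    and "\<And>x. complex_of_real (f x) = complex_of_real (1 / (2 * pi)) * integral {-\<sigma>..\<sigma>} (\<lambda>t. iexp (-(t * x)) * \<psi> t)"
proof -
  note PF = psi_facts[OF cf fb band]
  show vanish: "\<psi> s = 0" if "\<bar>s\<bar> > \<sigma>" for s unfolding \<psi>_def by (rule PF(1)[OF that])
  obtain m1 m2 M1 M2 where rd1: "real_distribution M1" and rd2: "real_distribution M2"
    and z1: "\<And>a. measure M1 {a} = 0" and z2: "\<And>a. measure M2 {a} = 0"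
    and pe: "\<And>s. \<psi> s = complex_of_real m1 * char M1 s - complex_of_real m2 * char M2 s"
    and me: "\<And>a b. m1 * measure M1 {a<..b} - m2 * measure M2 {a<..b} = (\<integral>x. indicator {a<..b} x * f x \<partial>lborel)"
    using PF(2) unfolding \<psi>_def by blast
  have pe': "\<psi> = (\<lambda>s. complex_of_real m1 * char M1 s - complex_of_real m2 * char M2 s)"
    using pe by auto
  show cpsi: "continuous_on UNIV \<psi>"
    unfolding pe' using char_cont[OF rd1] char_cont[OF rd2] by (intro continuous_intros)
  have cK: "continuous_on S (\<lambda>t. Kc a b t * \<psi> t)" for a b S
    using Kc_cont cpsi by (intro continuous_intros) (auto intro: continuous_on_subset)
  have cK1: "continuous_on S (\<lambda>t. Kc a b t * char M1 t)" for a b S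
    using Kc_cont char_cont[OF rd1] by (intro continuous_intros) (auto intro: continuous_on_subset)
  have cK2: "continuous_on S (\<lambda>t. Kc a b t * char M2 t)" for a b S
    using Kc_cont char_cont[OF rd2] by (intro continuous_intros) (auto intro: continuous_on_subset)
  have B6: "complex_of_real (\<integral>x. indicator {a<..b} x * f x \<partial>lborel)
      = complex_of_real (1 / (2 * pi)) * integral {-\<sigma>..\<sigma>} (\<lambda>t. Kc a b t * \<psi> t)" if ab: "a \<le> b" for a b
  proof -
    note L1 = real_distribution.Levy_Inversion[OF rd1 ab z1 z1]
    note L2 = real_distribution.Levy_Inversion[OF rd2 ab z2 z2]
    note L = tendsto_diff[OF tendsto_mult[OF tendsto_const L1] tendsto_mult[OF tendsto_const L2], of "complex_of_real m1" "complex_of_real m2"]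
    define C where "C = complex_of_real (1 / (2 * pi)) * integral {-\<sigma>..\<sigma>} (\<lambda>t. Kc a b t * \<psi> t)"
    have ev: "eventually (\<lambda>T. complex_of_real m1 * (complex_of_real (1 / (2 * pi)) * (CLBINT t=ereal (real_of_int (- int T))..ereal (real T). (iexp (- (t * a)) - iexp (- (t * b))) / (\<i> * complex_of_real t) * char M1 t))
        - complex_of_real m2 * (complex_of_real (1 / (2 * pi)) * (CLBINT t=ereal (real_of_int (- int T))..ereal (real T). (iexp (- (t * a)) - iexp (- (t * b))) / (\<i> * complex_of_real t) * char M2 t)) = C) sequentially"
    proof -
      obtain N :: nat where N: "real N \<ge> \<sigma>" using real_arch_simple by blast
      show ?thesis
      proof (rule eventually_sequentiallyI[of N])
        fix T :: nat assume "N \<le> T"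
        then have T: "real T \<ge> \<sigma>" using N by linarith
        have E1: "integral {- real T..real T} (\<lambda>t. Kc a b t * \<psi> t) = integral {-\<sigma>..\<sigma>} (\<lambda>t. Kc a b t * \<psi> t)"
        proof (rule integral_unique)
          have "((\<lambda>t. Kc a b t * \<psi> t) has_integral integral {-\<sigma>..\<sigma>} (\<lambda>t. Kc a b t * \<psi> t)) {-\<sigma>..\<sigma>}"
            using integrable_continuous_interval[OF cK] by (simp add: has_integral_integral)
          then show "((\<lambda>t. Kc a b t * \<psi> t) has_integral integral {-\<sigma>..\<sigma>} (\<lambda>t. Kc a b t * \<psi> t)) {- real T..real T}"
            by (rule has_integral_on_superset) (use T vanish in auto)
        qed
        have E2: "integral {- real T..real T} (\<lambda>t. Kc a b t * \<psi> t)
            = complex_of_real m1 * integral {- real T..real T} (\<lambda>t. Kc a b t * char M1 t)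
              - complex_of_real m2 * integral {- real T..real T} (\<lambda>t. Kc a b t * char M2 t)"
        proof -
          have "integral {- real T..real T} (\<lambda>t. Kc a b t * \<psi> t)
             = integral {- real T..real T} (\<lambda>t. complex_of_real m1 * (Kc a b t * char M1 t) - complex_of_real m2 * (Kc a b t * char M2 t))"
            unfolding pe by (simp add: algebra_simps)
          also have "\<dots> = integral {- real T..real T} (\<lambda>t. complex_of_real m1 * (Kc a b t * char M1 t))
              - integral {- real T..real T} (\<lambda>t. complex_of_real m2 * (Kc a b t * char M2 t))"
            by (intro integral_diff integrable_continuous_interval continuous_intros cK1 cK2)
          also have "\<dots> = complex_of_real m1 * integral {- real T..real T} (\<lambda>t. Kc a b t * char M1 t)
              - complex_of_real m2 * integral {- real T..real T} (\<lambda>t. Kc a b t * char M2 t)"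
            by (simp add: integral_mult_right)
          finally show ?thesis .
        qed
        show "complex_of_real m1 * (complex_of_real (1 / (2 * pi)) * (CLBINT t=ereal (real_of_int (- int T))..ereal (real T). (iexp (- (t * a)) - iexp (- (t * b))) / (\<i> * complex_of_real t) * char M1 t))
          - complex_of_real m2 * (complex_of_real (1 / (2 * pi)) * (CLBINT t=ereal (real_of_int (- int T))..ereal (real T). (iexp (- (t * a)) - iexp (- (t * b))) / (\<i> * complex_of_real t) * char M2 t)) = C"
          unfolding levy_HK_seq[OF rd1 ab] levy_HK_seq[OF rd2 ab] C_def
        proof -
          have "complex_of_real m1 * (complex_of_real (1 / (2 * pi)) * integral {- real T..real T} (\<lambda>t. Kc a b t * char M1 t))
             - complex_of_real m2 * (complex_of_real (1 / (2 * pi)) * integral {- real T..real T} (\<lambda>t. Kc a b t * char M2 t))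
             = complex_of_real (1 / (2 * pi)) * (complex_of_real m1 * integral {- real T..real T} (\<lambda>t. Kc a b t * char M1 t)
              - complex_of_real m2 * integral {- real T..real T} (\<lambda>t. Kc a b t * char M2 t))"
            by (simp add: algebra_simps)
          also have "\<dots> = complex_of_real (1 / (2 * pi)) * integral {-\<sigma>..\<sigma>} (\<lambda>t. Kc a b t * \<psi> t)"
            using E1 E2 by simp
          finally show "complex_of_real m1 * (complex_of_real (1 / (2 * pi)) * integral {- real T..real T} (\<lambda>t. Kc a b t * char M1 t))
             - complex_of_real m2 * (complex_of_real (1 / (2 * pi)) * integral {- real T..real T} (\<lambda>t. Kc a b t * char M2 t))
             = complex_of_real (1 / (2 * pi)) * integral {-\<sigma>..\<sigma>} (\<lambda>t. Kc a b t * \<psi> t)" .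
        qed
      qed
    qed
    have "(\<lambda>T. C) \<longlonglongrightarrow> complex_of_real m1 * complex_of_real (measure M1 {a<..b}) - complex_of_real m2 * complex_of_real (measure M2 {a<..b})"
      using L ev by (rule Lim_transform_eventually)
    then have "C = complex_of_real m1 * complex_of_real (measure M1 {a<..b}) - complex_of_real m2 * complex_of_real (measure M2 {a<..b})"
      using LIMSEQ_unique tendsto_const by blast
    also have "\<dots> = complex_of_real (\<integral>x. indicator {a<..b} x * f x \<partial>lborel)"
      using me[of a b] by (metis of_real_diff of_real_mult)
    finally show ?thesis unfolding C_def by simp
  qed
  define c where "c = complex_of_real (1 / (2 * pi))"
  define G where "G = (\<lambda>x. c * integral {-\<sigma>..\<sigma>} (\<lambda>t. iexp (-(t * x)) * \<psi> t))"
  have cF1: "continuous_on S (\<lambda>z::real\<times>real. iexp (-(fst z * snd z)) * \<psi> (fst z))" for S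
    by (intro continuous_intros continuous_on_compose2[OF cpsi]) auto
  have cF2: "continuous_on S (\<lambda>z::real\<times>real. iexp (-(snd z * fst z)) * \<psi> (snd z))" for S
    by (intro continuous_intros continuous_on_compose2[OF cpsi]) auto
  have cG: "continuous_on UNIV G"
  proof -
    have "continuous_on (UNIV \<times> cbox (-\<sigma>) \<sigma>) (\<lambda>(x, t). iexp (-(t * x)) * \<psi> t)"
      using cF2 by (simp add: case_prod_beta')
    from integral_continuous_on_param[OF this] show ?thesis
      unfolding G_def by (intro continuous_intros) simp
  qed
  have fi: "integrable lborel f" using f_integrable[OF cf fb] .
  have fm[measurable]: "f \<in> borel_measurable borel" using borel_measurable_continuous_onI[OF cf] .
  have cfab: "continuous_on {a..b} f" for a b using cf by (rule continuous_on_subset) auto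
  have eqint: "integral {a..b} (\<lambda>x. complex_of_real (f x)) = integral {a..b} G" if ab: "a \<le> b" for a b
  proof -
    have "integral {a..b} (\<lambda>x. complex_of_real (f x)) = complex_of_real (integral {a..b} f)"
      using integral_linear[OF integrable_continuous_interval[OF cfab] bounded_linear_of_real]
      by (simp add: o_def)
    also have "integral {a..b} f = (\<integral>x. indicator {a<..b} x * f x \<partial>lborel)"
    proof -
      have "(\<integral>x. indicator {a<..b} x * f x \<partial>lborel) = (\<integral>x. indicator {a..b} x * f x \<partial>lborel)"
      proof (rule integral_cong_AE)
        show "AE x in lborel. indicator {a<..b} x * f x = indicator {a..b} x * f x"
          using AE_lborel_singleton[of a] by eventually_elim (auto simp: indicator_def)
      qed auto
      also have "\<dots> = (LINT x:{a..b}|lborel. f x)" by (simp add: set_lebesgue_integral_def)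
      also have "\<dots> = integral {a..b} f"
        using borel_integrable_atLeastAtMost'[OF cfab] by (rule set_borel_integral_eq_integral)
      finally show ?thesis by simp
    qed
    also have "complex_of_real (\<integral>x. indicator {a<..b} x * f x \<partial>lborel) = c * integral {-\<sigma>..\<sigma>} (\<lambda>t. Kc a b t * \<psi> t)"
      using B6[OF ab] unfolding c_def .
    also have "integral {-\<sigma>..\<sigma>} (\<lambda>t. Kc a b t * \<psi> t) = integral {a..b} (\<lambda>x. integral {-\<sigma>..\<sigma>} (\<lambda>t. iexp (-(t * x)) * \<psi> t))"
    proof -
      have "(\<lambda>t. Kc a b t * \<psi> t) = (\<lambda>t. integral {a..b} (\<lambda>x. iexp (-(t * x)) * \<psi> t))"
        unfolding Kc_def by (simp add: integral_mult_left)
      moreover have "continuous_on (cbox (-\<sigma>, a) (\<sigma>, b)) (\<lambda>(t, x). iexp (-(t * x)) * \<psi> t)"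
        using cF1 by (simp add: case_prod_beta')
      note integral_swap_continuous[OF this]
      ultimately show ?thesis by simp
    qed
    also have "c * integral {a..b} (\<lambda>x. integral {-\<sigma>..\<sigma>} (\<lambda>t. iexp (-(t * x)) * \<psi> t)) = integral {a..b} G"
      unfolding G_def by (simp add: integral_mult_right)
    finally show ?thesis .
  qed
  show "complex_of_real (f x) = complex_of_real (1 / (2 * pi)) * integral {-\<sigma>..\<sigma>} (\<lambda>t. iexp (-(t * x)) * \<psi> t)" for x
  proof -
    have cf': "continuous_on {x-1..x+1} (\<lambda>x. complex_of_real (f x))"
      using cfab by (intro continuous_intros) auto
    have cG': "continuous_on {x-1..x+1} G" using cG by (rule continuous_on_subset) auto
    have xin: "x \<in> {x-1..x+1}" by simp
    have d1: "((\<lambda>u. integral {x-1..u} (\<lambda>x. complex_of_real (f x))) has_vector_derivative complex_of_real (f x)) (at x within {x-1..x+1})"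
      by (rule integral_has_vector_derivative[OF cf' xin])
    have d2: "((\<lambda>u. integral {x-1..u} G) has_vector_derivative G x) (at x within {x-1..x+1})"
      by (rule integral_has_vector_derivative[OF cG' xin])
    have d1': "((\<lambda>u. integral {x-1..u} G) has_vector_derivative complex_of_real (f x)) (at x within {x-1..x+1})"
      by (rule has_vector_derivative_transform[OF xin _ d1]) (simp add: eqint)
    have "complex_of_real (f x) = G x"
      by (rule vector_derivative_unique_within_closed_interval[of "x-1" "x+1"]) (use d1' d2 in auto)
    then show ?thesis unfolding G_def c_def .
  qed
qed


lemma iexp_sin: "iexp y - iexp (-y) = 2 * \<i> * complex_of_real (sin y)"
proof -
  have "iexp y = cis y" "iexp (-y) = cis (-y)" by (simp_all add: cis_conv_exp)
  then show ?thesis by (simp add: complex_eq_iff)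
qed

lemma term_id: "\<i> * complex_of_real (2 * cc * sin y) * iexp z = complex_of_real cc * (iexp (z + y) - iexp (z - y))"
proof -
  have e1: "iexp (z + y) = iexp z * iexp y" by (simp add: exp_add[symmetric] algebra_simps)
  have e2: "iexp (z - y) = iexp z * iexp (-y)" by (simp add: exp_add[symmetric] algebra_simps)
  have "complex_of_real cc * (iexp (z + y) - iexp (z - y)) = complex_of_real cc * iexp z * (iexp y - iexp (-y))"
    unfolding e1 e2 by (simp add: algebra_simps)
  also have "\<dots> = \<i> * complex_of_real (2 * cc * sin y) * iexp z"
    unfolding iexp_sin by (simp add: algebra_simps)
  finally show ?thesis by (rule sym)
qed

lemma bernstein:
  fixes f :: "real \<Rightarrow> real"
  assumes cf: "continuous_on UNIV f" and fb: "\<And>t. \<bar>f t\<bar> \<le> A / (1 + t^2)"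
    and band: "bandlimited f \<sigma>" and \<sigma>: "\<sigma> > 0" and A: "A > 0" and \<sigma>': "\<sigma>' > \<sigma>"
  shows "\<exists>D. (f has_real_derivative D) (at x) \<and> \<bar>D\<bar> \<le> \<sigma>' * A"
proof -
  define \<psi> where "\<psi> = (\<lambda>s. CLINT x|lborel. complex_of_real (f x) * iexp (s * x))"
  note INV = inversion[OF cf fb band \<sigma>]
  have cpsi: "continuous_on UNIV \<psi>" unfolding \<psi>_def by (rule INV(1))
  have fA: "\<bar>f t\<bar> \<le> A" for t
  proof -
    have "A / (1 + t^2) \<le> A / 1" using A by (intro divide_left_mono) (auto intro!: add_pos_nonneg)
    then show ?thesis using fb[of t] by simp
  qed
  define c where "c = complex_of_real (1 / (2 * pi))"
  define H where "H = (\<lambda>y. integral {-\<sigma>..\<sigma>} (\<lambda>t. iexp (-(t * y)) * \<psi> t))"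
  have fH: "complex_of_real (f y) = c * H y" for y
    unfolding c_def H_def \<psi>_def by (rule INV(3))
  define H' where "H' = integral {-\<sigma>..\<sigma>} (\<lambda>t. ((- t) *\<^sub>R (\<i> * iexp (-(t * x)))) * \<psi> t)"
  have dH: "(H has_vector_derivative H') (at x)"
  proof -
    have fx: "((\<lambda>x. iexp (-(t * x)) * \<psi> t) has_vector_derivative ((- t) *\<^sub>R (\<i> * iexp (-(t * y)))) * \<psi> t) (at y within UNIV)" for t y
    proof -
      have d1: "((\<lambda>x. - (t * x)) has_vector_derivative - t) (at y within UNIV)"
        by (rule derivative_eq_intros refl | simp)+
      have d2: "(iexp has_vector_derivative \<i> * iexp (-(t * y))) (at (-(t * y)) within (\<lambda>x. - (t * x)) ` UNIV)"
        by (rule has_vector_derivative_iexp)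
      have "((iexp \<circ> (\<lambda>x. - (t * x))) has_vector_derivative (- t) *\<^sub>R (\<i> * iexp (-(t * y)))) (at y within UNIV)"
        by (rule vector_diff_chain_within[OF d1 d2])
      then have "((\<lambda>x. iexp (- (t * x))) has_vector_derivative (- t) *\<^sub>R (\<i> * iexp (-(t * y)))) (at y within UNIV)"
        by (simp add: o_def)
      then show ?thesis by (rule has_vector_derivative_mult_left)
    qed
    have int: "(\<lambda>t. iexp (-(t * y)) * \<psi> t) integrable_on cbox (-\<sigma>) \<sigma>" for y
    proof -
      have "continuous_on {-\<sigma>..\<sigma>} (\<lambda>t. iexp (-(t * y)) * \<psi> t)"
        by (intro continuous_intros continuous_on_subset[OF cpsi]) auto
      then have "(\<lambda>t. iexp (-(t * y)) * \<psi> t) integrable_on {-\<sigma>..\<sigma>}"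
        by (rule integrable_continuous_interval)
      then show ?thesis by simp
    qed
    have cont: "continuous_on (UNIV \<times> cbox (-\<sigma>) \<sigma>) (\<lambda>(x, t). ((- t) *\<^sub>R (\<i> * iexp (-(t * x)))) * \<psi> t)"
    proof -
      have "continuous_on (UNIV \<times> cbox (-\<sigma>) \<sigma>) (\<lambda>z::real\<times>real. ((- snd z) *\<^sub>R (\<i> * iexp (-(snd z * fst z)))) * \<psi> (snd z))"
        by (intro continuous_intros continuous_on_compose2[OF cpsi]) auto
      then show ?thesis by (simp add: case_prod_beta')
    qed
    have "((\<lambda>x. integral (cbox (-\<sigma>) \<sigma>) (\<lambda>t. iexp (-(t * x)) * \<psi> t)) has_vector_derivative
        integral (cbox (-\<sigma>) \<sigma>) (\<lambda>t. ((- t) *\<^sub>R (\<i> * iexp (-(t * x)))) * \<psi> t)) (at x within UNIV)"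
      by (rule leibniz_rule_vector_derivative[OF fx int cont]) auto
    then show ?thesis unfolding H_def H'_def by simp
  qed
  have df: "(f has_real_derivative Re (c * H')) (at x)"
  proof -
    have "((\<lambda>y. c * H y) has_vector_derivative c * H') (at x)"
      by (rule has_vector_derivative_mult_right[OF dH])
    then have "((\<lambda>y. Re (c * H y)) has_vector_derivative Re (c * H')) (at x)"
      by (rule bounded_linear.has_vector_derivative[OF bounded_linear_Re])
    moreover have "(\<lambda>y. Re (c * H y)) = f"
      by (rule ext) (simp add: fH[symmetric])
    ultimately show ?thesis by (simp add: has_real_derivative_iff_has_vector_derivative)
  qed
  have bound: "norm (c * H') \<le> \<sigma>' * A"
  proof -
    have \<sigma>'0: "\<sigma>' > 0" using \<sigma> \<sigma>' by linarith
    define \<kappa> where "\<kappa> = 8 * \<sigma>' / pi^2"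
    have \<kappa>0: "\<kappa> > 0" unfolding \<kappa>_def using \<sigma>'0 by simp
    define \<theta> where "\<theta> = (\<lambda>t. pi * t / (2 * \<sigma>'))"
    define s where "s = (\<lambda>k::nat. real (2*k+1) * pi / (2 * \<sigma>'))"
    define cc where "cc = (\<lambda>k::nat. - (\<kappa> / 2) * ((-1)^k / (real (2*k+1))^2))"
    have cpsiS: "continuous_on S \<psi>" for S using cpsi by (rule continuous_on_subset) auto
    have I1: "\<i> * complex_of_real (- \<kappa> * gN N (\<theta> t)) * iexp (-(t * y))
        = (\<Sum>k<N. complex_of_real (cc k) * (iexp (-(t * (y - s k))) - iexp (-(t * (y + s k)))))" for N t y
    proof -
      have "- \<kappa> * gN N (\<theta> t) = (\<Sum>k<N. 2 * cc k * sin (t * s k))"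
        unfolding gN_def sum_distrib_left
      proof (intro sum.cong refl)
        fix k assume "k \<in> {..<N}"
        have arg: "real (2*k+1) * \<theta> t = t * s k" unfolding \<theta>_def s_def by (simp add: field_simps)
        show "- \<kappa> * ((-1)^k * sin (real (2*k+1) * \<theta> t) / (real (2*k+1))^2) = 2 * cc k * sin (t * s k)"
          unfolding arg cc_def by (simp add: field_simps)
      qed
      then have "\<i> * complex_of_real (- \<kappa> * gN N (\<theta> t)) * iexp (-(t * y))
          = (\<Sum>k<N. \<i> * complex_of_real (2 * cc k * sin (t * s k)) * iexp (-(t * y)))"
        by (simp add: sum_distrib_left sum_distrib_right)
      also have "\<dots> = (\<Sum>k<N. complex_of_real (cc k) * (iexp (-(t * y) + t * s k) - iexp (-(t * y) - t * s k)))"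
        by (intro sum.cong refl term_id)
      also have "\<dots> = (\<Sum>k<N. complex_of_real (cc k) * (iexp (-(t * (y - s k))) - iexp (-(t * (y + s k)))))"
        by (intro sum.cong refl) (simp add: algebra_simps)
      finally show ?thesis .
    qed
    have intc: "(\<lambda>t. iexp (-(t * y)) * \<psi> t) integrable_on {-\<sigma>..\<sigma>}" for y
      by (intro integrable_continuous_interval continuous_intros cpsiS)
    have I2: "c * integral {-\<sigma>..\<sigma>} (\<lambda>t. \<i> * complex_of_real (- \<kappa> * gN N (\<theta> t)) * iexp (-(t * x)) * \<psi> t)
        = (\<Sum>k<N. complex_of_real (cc k) * (complex_of_real (f (x - s k)) - complex_of_real (f (x + s k))))" for N
    proof -
      have "integral {-\<sigma>..\<sigma>} (\<lambda>t. \<i> * complex_of_real (- \<kappa> * gN N (\<theta> t)) * iexp (-(t * x)) * \<psi> t)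
          = integral {-\<sigma>..\<sigma>} (\<lambda>t. \<Sum>k<N. complex_of_real (cc k) * (iexp (-(t * (x - s k))) * \<psi> t - iexp (-(t * (x + s k))) * \<psi> t))"
      proof (intro arg_cong[where f="integral {-\<sigma>..\<sigma>}"] ext)
        fix t
        show "\<i> * complex_of_real (- \<kappa> * gN N (\<theta> t)) * iexp (-(t * x)) * \<psi> t
          = (\<Sum>k<N. complex_of_real (cc k) * (iexp (-(t * (x - s k))) * \<psi> t - iexp (-(t * (x + s k))) * \<psi> t))"
          unfolding I1 sum_distrib_right by (intro sum.cong refl) (simp add: algebra_simps)
      qed
      also have "\<dots> = (\<Sum>k<N. integral {-\<sigma>..\<sigma>} (\<lambda>t. complex_of_real (cc k) * (iexp (-(t * (x - s k))) * \<psi> t - iexp (-(t * (x + s k))) * \<psi> t)))"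
        by (intro integral_sum) (auto intro!: integrable_continuous_interval continuous_intros cpsiS)
      also have "\<dots> = (\<Sum>k<N. complex_of_real (cc k) * (H (x - s k) - H (x + s k)))"
      proof (intro sum.cong refl)
        fix k
        have "integral {-\<sigma>..\<sigma>} (\<lambda>t. complex_of_real (cc k) * (iexp (-(t * (x - s k))) * \<psi> t - iexp (-(t * (x + s k))) * \<psi> t))
          = complex_of_real (cc k) * integral {-\<sigma>..\<sigma>} (\<lambda>t. iexp (-(t * (x - s k))) * \<psi> t - iexp (-(t * (x + s k))) * \<psi> t)"
          by (rule integral_mult_right)
        also have "integral {-\<sigma>..\<sigma>} (\<lambda>t. iexp (-(t * (x - s k))) * \<psi> t - iexp (-(t * (x + s k))) * \<psi> t)
          = H (x - s k) - H (x + s k)"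
          unfolding H_def by (rule integral_diff[OF intc intc])
        finally show "integral {-\<sigma>..\<sigma>} (\<lambda>t. complex_of_real (cc k) * (iexp (-(t * (x - s k))) * \<psi> t - iexp (-(t * (x + s k))) * \<psi> t))
          = complex_of_real (cc k) * (H (x - s k) - H (x + s k))" .
      qed
      finally have "c * integral {-\<sigma>..\<sigma>} (\<lambda>t. \<i> * complex_of_real (- \<kappa> * gN N (\<theta> t)) * iexp (-(t * x)) * \<psi> t)
          = (\<Sum>k<N. complex_of_real (cc k) * (c * H (x - s k) - c * H (x + s k)))"
        by (simp add: sum_distrib_left algebra_simps)
      then show ?thesis by (simp add: fH)
    qed
    have I3: "norm (\<Sum>k<N. complex_of_real (cc k) * (complex_of_real (f (x - s k)) - complex_of_real (f (x + s k)))) \<le> \<sigma>' * A" for N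
    proof -
      have "norm (\<Sum>k<N. complex_of_real (cc k) * (complex_of_real (f (x - s k)) - complex_of_real (f (x + s k))))
          \<le> (\<Sum>k<N. norm (complex_of_real (cc k) * (complex_of_real (f (x - s k)) - complex_of_real (f (x + s k)))))"
        by (rule norm_sum)
      also have "\<dots> \<le> (\<Sum>k<N. \<kappa> * A * (1 / (real (2*k+1))^2))"
      proof (intro sum_mono)
        fix k assume "k \<in> {..<N}"
        have "norm (complex_of_real (cc k) * (complex_of_real (f (x - s k)) - complex_of_real (f (x + s k))))
            = \<bar>cc k\<bar> * \<bar>f (x - s k) - f (x + s k)\<bar>"
          by (simp add: norm_mult flip: of_real_diff)
        also have "\<dots> \<le> \<bar>cc k\<bar> * (2 * A)"
          using fA[of "x - s k"] fA[of "x + s k"] by (intro mult_left_mono) auto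
        also have "\<dots> = \<kappa> * A * (1 / (real (2*k+1))^2)"
          unfolding cc_def using \<kappa>0 by (simp add: abs_mult)
        finally show "norm (complex_of_real (cc k) * (complex_of_real (f (x - s k)) - complex_of_real (f (x + s k))))
            \<le> \<kappa> * A * (1 / (real (2*k+1))^2)" .
      qed
      also have "\<dots> = \<kappa> * A * (\<Sum>k<N. 1 / (real (2*k+1))^2)"
        by (simp add: sum_distrib_left)
      also have "\<dots> \<le> \<kappa> * A * (pi^2 / 8)"
        using odd_squares_le[of N] \<kappa>0 A by (intro mult_left_mono) auto
      also have "\<dots> = \<sigma>' * A" unfolding \<kappa>_def by simp
      finally show ?thesis .
    qed
    obtain B where B: "B > 0" "\<And>t. t \<in> {-\<sigma>..\<sigma>} \<Longrightarrow> norm (\<psi> t) \<le> B"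
    proof -
      have "bounded (\<psi> ` {-\<sigma>..\<sigma>})"
        by (intro compact_imp_bounded compact_continuous_image cpsiS compact_Icc)
      then show ?thesis using that by (auto simp: bounded_pos)
    qed
    define c\<theta> where "c\<theta> = pi * \<sigma> / (2 * \<sigma>')"
    have c\<theta>: "0 \<le> c\<theta>" "c\<theta> < pi / 2"
      unfolding c\<theta>_def using \<sigma> \<sigma>' \<sigma>'0 by (auto simp: field_simps)
    have th: "\<bar>\<theta> t\<bar> \<le> c\<theta>" if "t \<in> {-\<sigma>..\<sigma>}" for t
    proof -
      have "\<bar>t\<bar> \<le> \<sigma>" using that by auto
      then have "pi * \<bar>t\<bar> \<le> pi * \<sigma>" by (intro mult_left_mono) auto
      then have "pi * \<bar>t\<bar> / (2 * \<sigma>') \<le> pi * \<sigma> / (2 * \<sigma>')" using \<sigma>'0 by (intro divide_right_mono) auto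
      then show ?thesis unfolding \<theta>_def c\<theta>_def using \<sigma>'0 by (simp add: abs_mult)
    qed
    show ?thesis
    proof (rule field_le_epsilon)
      fix e :: real assume e: "e > 0"
      define Q where "Q = norm c * \<kappa> * B * (2 * \<sigma>)"
      have Q: "Q > 0" unfolding Q_def c_def using \<kappa>0 B \<sigma> by simp
      define \<epsilon> where "\<epsilon> = e / Q"
      have \<epsilon>: "\<epsilon> > 0" unfolding \<epsilon>_def using e Q by simp
      obtain N0 where N0: "\<And>N. N \<ge> N0 \<Longrightarrow> \<forall>y. \<bar>y\<bar> \<le> c\<theta> \<longrightarrow> \<bar>gN N y - pi/4 * y\<bar> \<le> \<epsilon>"
        using tri_uniform[OF c\<theta> \<epsilon>] by blast
      define I where "I = integral {-\<sigma>..\<sigma>} (\<lambda>t. \<i> * complex_of_real (- \<kappa> * gN N0 (\<theta> t)) * iexp (-(t * x)) * \<psi> t)"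
      define Df where "Df = (\<lambda>t. ((- t) *\<^sub>R (\<i> * iexp (-(t * x)))) * \<psi> t - \<i> * complex_of_real (- \<kappa> * gN N0 (\<theta> t)) * iexp (-(t * x)) * \<psi> t)"
      have cgN: "continuous_on S (\<lambda>t. gN N0 (\<theta> t))" for S
        unfolding gN_def \<theta>_def using \<sigma>'0 by (intro continuous_intros) auto
      have cD1: "continuous_on {-\<sigma>..\<sigma>} (\<lambda>t. ((- t) *\<^sub>R (\<i> * iexp (-(t * x)))) * \<psi> t)"
        by (intro continuous_intros cpsiS)
      have cD2: "continuous_on {-\<sigma>..\<sigma>} (\<lambda>t. \<i> * complex_of_real (- \<kappa> * gN N0 (\<theta> t)) * iexp (-(t * x)) * \<psi> t)"
        by (intro continuous_intros cpsiS cgN)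
      have HI: "H' - I = integral {-\<sigma>..\<sigma>} Df"
        unfolding H'_def I_def Df_def
        by (rule integral_diff[symmetric]) (intro integrable_continuous_interval cD1 cD2)+
      have Db: "norm (Df t) \<le> \<kappa> * \<epsilon> * B" if t: "t \<in> {-\<sigma>..\<sigma>}" for t
      proof -
        have tt: "t = \<kappa> * (pi / 4 * \<theta> t)" unfolding \<kappa>_def \<theta>_def using \<sigma>'0 by (simp add: field_simps power2_eq_square)
        have "Df t = \<i> * iexp (-(t * x)) * \<psi> t * complex_of_real (\<kappa> * gN N0 (\<theta> t) - t)"
          unfolding Df_def by (simp add: scaleR_conv_of_real algebra_simps)
        also have "\<kappa> * gN N0 (\<theta> t) - t = \<kappa> * (gN N0 (\<theta> t) - pi / 4 * \<theta> t)"
          by (metis tt right_diff_distrib)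
        finally have Dft: "Df t = \<i> * iexp (-(t * x)) * \<psi> t * complex_of_real (\<kappa> * (gN N0 (\<theta> t) - pi / 4 * \<theta> t))" .
        have ni: "norm (iexp (-(t * x))) = 1" by simp
        have "norm (Df t) = norm (\<psi> t) * \<bar>\<kappa> * (gN N0 (\<theta> t) - pi / 4 * \<theta> t)\<bar>"
          unfolding Dft norm_mult norm_of_real ni by simp
        also have "\<dots> = norm (\<psi> t) * (\<kappa> * \<bar>gN N0 (\<theta> t) - pi / 4 * \<theta> t\<bar>)"
          using \<kappa>0 by (simp add: abs_mult)
        also have "\<dots> \<le> B * (\<kappa> * \<epsilon>)"
          using B(2)[OF t] B(1) N0[of N0] th[OF t] \<kappa>0 by (intro mult_mono mult_left_mono) auto
        finally show ?thesis by (simp add: algebra_simps)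
      qed
      have "norm (integral {-\<sigma>..\<sigma>} Df) \<le> \<kappa> * \<epsilon> * B * (\<sigma> - - \<sigma>)"
      proof (rule integral_bound)
        show "continuous_on {-\<sigma>..\<sigma>} Df" unfolding Df_def by (rule continuous_on_diff[OF cD1 cD2])
      qed (use \<sigma> Db in auto)
      then have nHI: "norm (H' - I) \<le> \<kappa> * \<epsilon> * B * (2 * \<sigma>)" unfolding HI by simp
      have "norm (c * H') \<le> norm (c * (H' - I)) + norm (c * I)"
        by (metis add_diff_cancel_left' diff_add_cancel norm_triangle_ineq right_diff_distrib')
      also have "norm (c * (H' - I)) \<le> norm c * (\<kappa> * \<epsilon> * B * (2 * \<sigma>))"
        unfolding norm_mult by (intro mult_left_mono nHI) simp
      also have "norm c * (\<kappa> * \<epsilon> * B * (2 * \<sigma>)) = e"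
      proof -
        have "norm c * (\<kappa> * \<epsilon> * B * (2 * \<sigma>)) = \<epsilon> * Q" unfolding Q_def by (simp add: algebra_simps)
        also have "\<dots> = e" unfolding \<epsilon>_def using Q by simp
        finally show ?thesis .
      qed
      also have "norm (c * I) \<le> \<sigma>' * A" unfolding I_def I2 by (rule I3)
      finally show "norm (c * H') \<le> \<sigma>' * A + e" by simp
    qed
  qed
  show ?thesis
  proof (intro exI conjI)
    show "(f has_real_derivative Re (c * H')) (at x)" by (rule df)
    show "\<bar>Re (c * H')\<bar> \<le> \<sigma>' * A" using abs_Re_le_cmod[of "c * H'"] bound by linarith
  qed
qed


theorem mainTheorem7:
  fixes f :: "real \<Rightarrow> real" and \<sigma> A \<alpha> \<beta> :: real
  assumes "\<sigma> > 0" and "A > 0"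
    and "continuous_on UNIV f"
    and "bandlimited f \<sigma>"
    and "\<And>t. \<bar>f t\<bar> \<le> A / (1 + t^2)"
    and "\<alpha> > A * \<sigma>"
  shows "moderate_decrease (\<lambda>u. inv (\<lambda>t. \<alpha> * t + f t) u - \<beta> * u) \<longleftrightarrow> \<beta> = 1 / \<alpha>"
proof -
  note \<sigma> = assms(1) and A = assms(2) and cf = assms(3) and band = assms(4) and fb = assms(5) and \<alpha> = assms(6)
  define \<sigma>' where "\<sigma>' = (\<sigma> + \<alpha> / A) / 2"
  have s1: "\<sigma> < \<alpha> / A" using \<alpha> A by (simp add: field_simps)
  define r where "r = \<alpha> / A"
  have s2: "\<sigma>' > \<sigma>" unfolding \<sigma>'_def r_def[symmetric] using s1 unfolding r_def[symmetric] by (simp add: field_simps)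
  have s3: "\<sigma>' < \<alpha> / A" unfolding \<sigma>'_def r_def[symmetric] using s1 unfolding r_def[symmetric] by (simp add: field_simps)
  have L: "\<sigma>' * A < \<alpha>" using s3 A by (simp add: field_simps)
  have \<alpha>0: "\<alpha> > 0" using \<alpha> A \<sigma> by (smt (verit) mult_pos_pos)
  define f' where "f' = (\<lambda>x. SOME D. (f has_real_derivative D) (at x) \<and> \<bar>D\<bar> \<le> \<sigma>' * A)"
  have f': "(f has_real_derivative f' x) (at x) \<and> \<bar>f' x\<bar> \<le> \<sigma>' * A" for x
    unfolding f'_def by (rule someI_ex) (rule bernstein[OF cf fb band \<sigma> A s2])
  show ?thesis
    by (rule final_part[OF \<alpha>0 A cf fb]) (use f' L in auto)
qed

end
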